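(* Let $n\in\mathbb{N}$, $a<b$, let $Z=\{z_i:i\in\mathbb{Z}\}$ be $n$-close on $(a,b)$, and let $F:[a,b]\to\mathbb{R}$ be zig-zag of order $n$ with respect to $Z$ on $[a,b]$. Then $$|F(z_i)-F(z_{i+1})|\ge 2^n|z_i-z_{i+1}|\quad\text{for all } i.$$ Furthermore, let $\mathcal{F}=\{[z_i,z_{i+1}]:i\in\mathbb{Z}\}$, and let $U=\bigsqcup_{i\in J}(a_i,b_i)\subset(a,b)$ be an open set (written as the disjoint union of its components) which is trim on $\mathcal{F}$. Let $G:[a,b]\to\mathbb{R}$ satisfy $G(a)=G(b)=F(a)$ and $G|_{[z_i,z_{i+1}]}=g(F,[z_i,z_{i+1}],U)$ for all $i\in\mathbb{Z}$. Define $H(x)=G(x)+\sum_{i\in J}\Phi_{n,[a_i,b_i]}(x)$ for $x\in[a,b]$. Then $$H(x)\le G(a)+2\,\Phi_{n,[a,b]}(x)\quad\text{for all } x\in[a,b].$$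
   Context: $|\cdot|$ denotes Lebesgue measure. For a closed interval $I=[a,b]$ and $n\in\mathbb{N}$, $\Phi_{n,I}(x)=2^{-n}\min\{x-a,b-x\}$ if $x\in[a,b]$ and $\Phi_{n,I}(x)=0$ otherwise. A set $Z=\{z_j:j\in\mathbb{Z}\}$ is $n$-close on $(a,b)$ if $a<z_j<z_{j+1}<b$ for all $j\in\mathbb{Z}$, $z_j\to b$ as $j\to\infty$, $z_j\to a$ as $j\to-\infty$, and $z_{j+1}-z_j<4^{-n}\min\{z_j-a,\,b-z_{j+1}\}$ for all $j\in\mathbb{Z}$. If $Z$ is $n$-close on $(a,b)$, a function $F:[a,b]\to\mathbb{R}$ is zig-zag of order $n$ with respect to $Z$ on $[a,b]$ if $F(a)=F(b)$, $F(z_j)=F(a)$ for even $j$, $F(z_j)=F(a)+\Phi_{n,[a,b]}(z_j)$ for odd $j$, and $F$ is linear (affine) on $[z_j,z_{j+1}]$ for every $j\in\mathbb{Z}$. An open set $U$ is trim in a closed interval $[c,d]$ if $|U\cap[c,d]|<d-c$ and $c,d\notin U$; $U$ is trim on a collection $\mathcal{F}$ of pairwise non-overlapping closed intervals if it is trim in each interval of $\mathcal{F}$. For $f$ linear on $[c,d]$ and $U$ trim in $[c,d]$, $g(f,[c,d],U)$ is the function on $[c,d]$ given by $g(x)=f(c)+\frac{|([c,d]\setminus U)\cap[c,x]|}{|[c,d]\setminus U|}(f(d)-f(c))$. *)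

theory Defs
  imports "HOL-Analysis.Analysis"
begin

definition Phi :: "nat \<Rightarrow> real \<Rightarrow> real \<Rightarrow> real \<Rightarrow> real" where
  "Phi n c d x = (if x \<in> {c..d} then (1/2)^n * min (x - c) (d - x) else 0)"

definition n_close :: "nat \<Rightarrow> (int \<Rightarrow> real) \<Rightarrow> real \<Rightarrow> real \<Rightarrow> bool" where
  "n_close n z a b \<longleftrightarrow>
     (\<forall>j. a < z j \<and> z j < z (j+1) \<and> z (j+1) < b) \<and>
     (z \<longlongrightarrow> b) at_top \<and> (z \<longlongrightarrow> a) at_bot \<and>
     (\<forall>j. z (j+1) - z j < (1/4)^n * min (z j - a) (b - z (j+1)))"

definition affine_on_ivl :: "(real \<Rightarrow> real) \<Rightarrow> real \<Rightarrow> real \<Rightarrow> bool" where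
  "affine_on_ivl f c d \<longleftrightarrow> (\<exists>m k. \<forall>x\<in>{c..d}. f x = m * x + k)"

definition zigzag :: "nat \<Rightarrow> (int \<Rightarrow> real) \<Rightarrow> real \<Rightarrow> real \<Rightarrow> (real \<Rightarrow> real) \<Rightarrow> bool" where
  "zigzag n z a b F \<longleftrightarrow>
     F a = F b \<and>
     (\<forall>j. even j \<longrightarrow> F (z j) = F a) \<and>
     (\<forall>j. odd j \<longrightarrow> F (z j) = F a + Phi n a b (z j)) \<and>
     (\<forall>j. affine_on_ivl F (z j) (z (j+1)))"

definition trim_in :: "real set \<Rightarrow> real \<Rightarrow> real \<Rightarrow> bool" where
  "trim_in U c d \<longleftrightarrow> measure lebesgue (U \<inter> {c..d}) < d - c \<and> c \<notin> U \<and> d \<notin> U"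

definition gfun :: "(real \<Rightarrow> real) \<Rightarrow> real \<Rightarrow> real \<Rightarrow> real set \<Rightarrow> real \<Rightarrow> real" where
  "gfun f c d U x = f c + measure lebesgue (({c..d} - U) \<inter> {c..x}) / measure lebesgue ({c..d} - U) * (f d - f c)"

end

theory Submission
  imports Defs
begin


lemma Phi_zero: "x \<notin> {c<..<d} \<Longrightarrow> Phi n c d x = 0"
  by (auto simp: Phi_def min_def)

lemma infsum_single:
  assumes "k \<in> J" "\<And>i. i\<in>J \<Longrightarrow> i\<noteq>k \<Longrightarrow> f i = 0" shows "infsum f J = (f k :: real)"
proof -
  have "infsum f J = infsum f {k}" by (rule infsum_cong_neutral) (use assms in auto)
  then show ?thesis by simp
qed

lemma ratio_01:
  fixes U :: "real set" assumes "open U" "c \<le> x" "x \<le> d"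
  defines "r \<equiv> measure lebesgue (({c..d} - U) \<inter> {c..x}) / measure lebesgue ({c..d} - U)"
  shows "0 \<le> r \<and> r \<le> 1"
proof -
  have m: "({c..d} - U) \<in> lmeasurable"
    by (rule bounded_set_imp_lmeasurable) (use assms in \<open>auto intro: bounded_subset[of "{c..d}"]\<close>)
  have A: "({c..d} - U) \<inter> {c..x} \<in> sets lebesgue" using assms by auto
  have le: "measure lebesgue (({c..d} - U) \<inter> {c..x}) \<le> measure lebesgue ({c..d} - U)"
    by (rule measure_mono_fmeasurable[OF _ A m]) auto
  define A' where "A' = measure lebesgue (({c..d} - U) \<inter> {c..x})"
  define B' where "B' = measure lebesgue ({c..d} - U)"
  have a0: "0 \<le> A'" and b0: "0 \<le> B'" and ab: "A' \<le> B'" using le by (simp_all add: A'_def B'_def)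
  have "0 \<le> A' / B' \<and> A' / B' \<le> 1"
  proof (cases "B' = 0")
    case True then show ?thesis by simp
  next
    case False then have "B' > 0" using b0 by linarith
    then show ?thesis using a0 ab by (simp add: divide_le_eq_1_pos)
  qed
  then show ?thesis unfolding r_def A'_def B'_def .
qed

lemma between:
  fixes z :: "int \<Rightarrow> real"
  assumes "z j \<le> x" "x < z (j + int m)"
  shows "\<exists>i. z i \<le> x \<and> x < z (i+1)"
  using assms
proof (induction m)
  case 0 then show ?case by simp
next
  case (Suc m)
  show ?case
  proof (cases "z (j + int m) \<le> x")
    case True then show ?thesis using Suc.prems by (intro exI[of _ "j + int m"]) (simp add: ac_simps)
  next
    case False then show ?thesis using Suc by auto
  qed
qed


theorem mainTheorem5:
  fixes n :: nat and a b :: real and z :: "int \<Rightarrow> real" and F :: "real \<Rightarrow> real"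
  assumes "a < b"
    and "n_close n z a b"
    and "zigzag n z a b F"
  shows "(\<forall>i. \<bar>F (z i) - F (z (i+1))\<bar> \<ge> 2^n * \<bar>z i - z (i+1)\<bar>) \<and>
    (\<forall>(U::real set) (J::'j set) (aa::'j \<Rightarrow> real) (bb::'j \<Rightarrow> real) (G::real \<Rightarrow> real).
        open U \<and> U \<subseteq> {a<..<b} \<and>
        U = (\<Union>i\<in>J. {aa i<..<bb i}) \<and> (\<forall>i\<in>J. aa i < bb i) \<and>
        (\<forall>i\<in>J. \<forall>k\<in>J. i \<noteq> k \<longrightarrow> {aa i<..<bb i} \<inter> {aa k<..<bb k} = {}) \<and>
        (\<forall>i. trim_in U (z i) (z (i+1))) \<and>
        G a = F a \<and> G b = F a \<and>
        (\<forall>i. \<forall>x\<in>{z i..z (i+1)}. G x = gfun F (z i) (z (i+1)) U x)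
      \<longrightarrow> (\<forall>x\<in>{a..b}. G x + (\<Sum>\<^sub>\<infinity>i\<in>J. Phi n (aa i) (bb i) x) \<le> G a + 2 * Phi n a b x))"
proof -
  define c :: real where "c = (1/2)^n"
  have cpos: "c > 0" unfolding c_def by simp
  from assms(2) have zlt: "\<And>j. a < z j \<and> z j < z(j+1) \<and> z(j+1) < b"
    and lim1: "(z \<longlongrightarrow> b) at_top" and lim2: "(z \<longlongrightarrow> a) at_bot"
    and close: "\<And>j. z(j+1) - z j < (1/4)^n * min (z j - a) (b - z(j+1))"
    by (auto simp: n_close_def)
  from assms(3) have Fev: "\<And>j. even j \<Longrightarrow> F(z j) = F a"
    and Fod: "\<And>j. odd j \<Longrightarrow> F (z j) = F a + Phi n a b (z j)" by (auto simp: zigzag_def)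
  have Pz: "\<And>j. Phi n a b (z j) = c * min (z j - a) (b - z j)"
  proof -
    fix j have "a < z j" "z j < b" using zlt[of j] by auto
    then show "Phi n a b (z j) = c * min (z j - a) (b - z j)" by (simp add: Phi_def c_def)
  qed
  have key: "\<And>i. \<exists>j\<in>{i,i+1}. odd j \<and> ((F(z i) = F a \<and> F(z(i+1)) = F a + Phi n a b (z j)) \<or> (F(z(i+1)) = F a \<and> F(z i) = F a + Phi n a b (z j)))"
  proof -
    fix i :: int
    show "\<exists>j\<in>{i,i+1}. odd j \<and> ((F(z i) = F a \<and> F(z(i+1)) = F a + Phi n a b (z j)) \<or> (F(z(i+1)) = F a \<and> F(z i) = F a + Phi n a b (z j)))"
    proof (cases "even i")
      case True then show ?thesis using Fev Fod by (intro bexI[of _ "i+1"]) auto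
    next
      case False then show ?thesis using Fev Fod by (intro bexI[of _ "i"]) auto
    qed
  qed
  have four: "\<And>i::int. 4^n * (z(i+1) - z i) < min (z i - a) (b - z(i+1))"
  proof -
    fix i
    have e: "(4::real)^n * (1/4)^n = 1" by (simp add: power_mult_distrib[symmetric])
    have "4^n * (z(i+1) - z i) < 4^n * ((1/4)^n * min (z i - a) (b - z(i+1)))"
      by (rule mult_strict_left_mono[OF close]) simp
    also have "\<dots> = min (z i - a) (b - z(i+1))" by (simp add: mult.assoc[symmetric] e)
    finally show "4^n * (z(i+1) - z i) < min (z i - a) (b - z(i+1))" .
  qed
  have c4: "c * 4^n = 2^n" unfolding c_def by (simp add: power_mult_distrib[symmetric])
  have Pbig: "\<And>(i::int) j. j \<in> {i,i+1} \<Longrightarrow> 2^n * (z(i+1) - z i) \<le> Phi n a b (z j)"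
  proof -
    fix i j :: int assume j: "j \<in> {i, i+1}"
    have m: "min (z i - a) (b - z(i+1)) \<le> min (z j - a) (b - z j)" using j zlt[of i] by auto
    have "2^n * (z(i+1) - z i) = c * (4^n * (z(i+1) - z i))" using c4 by (simp add: mult.assoc[symmetric])
    also have "\<dots> \<le> c * min (z j - a) (b - z j)"
      using four[of i] m cpos by (intro mult_left_mono) auto
    finally show "2^n * (z(i+1) - z i) \<le> Phi n a b (z j)" using Pz by simp
  qed
  have part1: "\<forall>i. \<bar>F (z i) - F (z (i+1))\<bar> \<ge> 2^n * \<bar>z i - z (i+1)\<bar>"
  proof
    fix i
    obtain j where j: "j \<in> {i,i+1}" "(F(z i) = F a \<and> F(z(i+1)) = F a + Phi n a b (z j)) \<or> (F(z(i+1)) = F a \<and> F(z i) = F a + Phi n a b (z j))"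
      using key[of i] by blast
    have "\<bar>F (z i) - F (z (i+1))\<bar> = \<bar>Phi n a b (z j)\<bar>" using j(2) by auto
    moreover have "\<bar>z i - z (i+1)\<bar> = z(i+1) - z i" using zlt[of i] by auto
    ultimately show "\<bar>F (z i) - F (z (i+1))\<bar> \<ge> 2^n * \<bar>z i - z (i+1)\<bar>" using Pbig[OF j(1)] by auto
  qed
  show ?thesis
  proof (intro conjI part1 allI impI ballI)
    fix U :: "real set" and J :: "'j set" and aa bb :: "'j \<Rightarrow> real" and G x
    assume H: "open U \<and> U \<subseteq> {a<..<b} \<and>
        U = (\<Union>i\<in>J. {aa i<..<bb i}) \<and> (\<forall>i\<in>J. aa i < bb i) \<and>
        (\<forall>i\<in>J. \<forall>k\<in>J. i \<noteq> k \<longrightarrow> {aa i<..<bb i} \<inter> {aa k<..<bb k} = {}) \<and>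
        (\<forall>i. trim_in U (z i) (z (i+1))) \<and>
        G a = F a \<and> G b = F a \<and>
        (\<forall>i. \<forall>x\<in>{z i..z (i+1)}. G x = gfun F (z i) (z (i+1)) U x)"
      and x: "x \<in> {a..b}"
    have opU: "open U" and Usub: "U \<subseteq> {a<..<b}" and Ueq: "U = (\<Union>i\<in>J. {aa i<..<bb i})"
      and disj: "\<And>i k. i\<in>J \<Longrightarrow> k\<in>J \<Longrightarrow> i \<noteq> k \<Longrightarrow> {aa i<..<bb i} \<inter> {aa k<..<bb k} = {}"
      and trim: "\<And>i. trim_in U (z i) (z (i+1))" and Ga: "G a = F a" and Gb: "G b = F a"
      and Gdef: "\<And>i x. x\<in>{z i..z (i+1)} \<Longrightarrow> G x = gfun F (z i) (z (i+1)) U x"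
      using H by auto
    have zU: "\<And>i. z i \<notin> U" using trim by (auto simp: trim_in_def)
    show "G x + (\<Sum>\<^sub>\<infinity>i\<in>J. Phi n (aa i) (bb i) x) \<le> G a + 2 * Phi n a b x"
    proof (cases "x = a \<or> x = b")
      case True
      have "x \<notin> U" using True Usub by auto
      then have "(\<Sum>\<^sub>\<infinity>i\<in>J. Phi n (aa i) (bb i) x) = 0"
        by (intro infsum_0 Phi_zero) (auto simp: Ueq)
      moreover have "Phi n a b x = 0" using True \<open>a < b\<close> by (auto simp: Phi_def)
      ultimately show ?thesis using True Ga Gb by auto
    next
      case False
      then have xab: "a < x" "x < b" using x by auto
      obtain N where N: "\<And>k. k \<le> N \<Longrightarrow> z k < x"
        using order_tendstoD(2)[OF lim2 xab(1)] by (auto simp: eventually_at_bot_linorder)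
      obtain M where M: "\<And>k. k \<ge> M \<Longrightarrow> z k > x"
        using order_tendstoD(1)[OF lim1 xab(2)] by (auto simp: eventually_at_top_linorder)
      define j' where "j' = max M (N+1)"
      have "z N \<le> x" using N[of N] by auto
      moreover have "x < z (N + int (nat (j' - N)))" using M j'_def by auto
      ultimately obtain i where i: "z i \<le> x" "x < z(i+1)" using between by blast
      have xi: "x \<in> {z i..z(i+1)}" using i by auto
      define m where "m = min (x - z i) (z(i+1) - x)"
      have sumle: "(\<Sum>\<^sub>\<infinity>i\<in>J. Phi n (aa i) (bb i) x) \<le> c * m"
      proof (cases "\<exists>k\<in>J. x \<in> {aa k<..<bb k}")
        case True
        then obtain k where k: "k \<in> J" "x \<in> {aa k<..<bb k}" by blast
        have "(\<Sum>\<^sub>\<infinity>i\<in>J. Phi n (aa i) (bb i) x) = Phi n (aa k) (bb k) x"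
        proof (rule infsum_single[OF k(1)])
          fix l assume "l \<in> J" "l \<noteq> k"
          then have "x \<notin> {aa l<..<bb l}" using disj[of l k] k by auto
          then show "Phi n (aa l) (bb l) x = 0" by (rule Phi_zero)
        qed
        moreover have "x \<in> U" using k Ueq by auto
        moreover have "aa k \<ge> z i"
        proof (rule ccontr)
          assume "\<not> ?thesis"
          then have "z i \<in> U" using k i Ueq by (auto intro!: bexI[of _ k])
          then show False using zU by blast
        qed
        moreover have "bb k \<le> z (i+1)"
        proof (rule ccontr)
          assume "\<not> ?thesis"
          then have "z (i+1) \<in> U" using k i Ueq by (auto intro!: bexI[of _ k])
          then show False using zU by blast
        qed
        ultimately show ?thesis using k cpos unfolding m_def
          by (auto simp: Phi_def c_def intro!: mult_left_mono)
      next
        case False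
        then have "(\<Sum>\<^sub>\<infinity>i\<in>J. Phi n (aa i) (bb i) x) = 0"
          by (intro infsum_0 Phi_zero) auto
        then show ?thesis using cpos i unfolding m_def by auto
      qed
      obtain j where j: "j \<in> {i,i+1}" "(F(z i) = F a \<and> F(z(i+1)) = F a + Phi n a b (z j)) \<or> (F(z(i+1)) = F a \<and> F(z i) = F a + Phi n a b (z j))"
        using key[of i] by blast
      define r where "r = measure lebesgue (({z i..z(i+1)} - U) \<inter> {z i..x}) / measure lebesgue ({z i..z(i+1)} - U)"
      have r: "0 \<le> r" "r \<le> 1" using ratio_01[OF opU, of "z i" x "z(i+1)"] i unfolding r_def by auto
      have Gx: "G x = F (z i) + r * (F (z(i+1)) - F(z i))"
        using Gdef[OF xi] by (simp add: gfun_def r_def)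
      have Pzj0: "Phi n a b (z j) \<ge> 0" using Pz[of j] cpos zlt[of j] by auto
      have G1: "G x \<le> F a + Phi n a b (z j)"
      proof -
        from j(2) show ?thesis
        proof
          assume h: "F(z i) = F a \<and> F(z(i+1)) = F a + Phi n a b (z j)"
          have "r * Phi n a b (z j) \<le> 1 * Phi n a b (z j)" using r Pzj0 by (intro mult_right_mono) auto
          then show ?thesis using h Gx by auto
        next
          assume h: "F(z(i+1)) = F a \<and> F(z i) = F a + Phi n a b (z j)"
          have "r * Phi n a b (z j) \<ge> 0" using r Pzj0 by auto
          then show ?thesis using h Gx by (auto simp: algebra_simps)
        qed
      qed
      have Px: "Phi n a b x = c * min (x - a) (b - x)" using x by (simp add: Phi_def c_def)
      have lip: "min (z j - a) (b - z j) \<le> min (x - a) (b - x) + \<bar>x - z j\<bar>" by auto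
      have G2: "Phi n a b (z j) \<le> Phi n a b x + c * \<bar>x - z j\<bar>"
        using mult_left_mono[OF lip, of c] cpos Pz[of j] Px by (simp add: algebra_simps)
      have dm: "\<bar>x - z j\<bar> + m \<le> z(i+1) - z i" using j(1) i unfolding m_def by auto
      have "(1::real) \<le> 4^n" by simp
      then have d4: "1 * (z(i+1) - z i) \<le> 4^n * (z(i+1) - z i)" using zlt[of i] by (intro mult_right_mono) auto
      have "z(i+1) - z i < min (z i - a) (b - z(i+1))" using d4 four[of i] by (metis mult_1 order_le_less_trans)
      then have "z(i+1) - z i \<le> min (x - a) (b - x)" using i by auto
      then have G3: "c * (z(i+1) - z i) \<le> Phi n a b x" using Px cpos by (auto intro: mult_left_mono)
      have "c * \<bar>x - z j\<bar> + c * m \<le> c * (z(i+1) - z i)"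
        using mult_left_mono[OF dm, of c] cpos by (simp add: algebra_simps)
      then show ?thesis using G1 G2 G3 sumle Ga by linarith
    qed
  qed
qed

end
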